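(* Let $M$ be a countable $\aleph_0$-categorical structure with no algebraicity that admits weak elimination of imaginaries. Then for all $A,B\subseteq M$, $$\mathrm{acl}^{eq}A\cap \mathrm{acl}^{eq}B=\mathrm{dcl}^{eq}(A\cap B).$$
   Context: $G=\operatorname{Aut}(M)$; for finite $A$, $G_A$ is the pointwise stabilizer. $M^{eq}$ is the disjoint union of $M^k/E$ over all $k$ and all $G$-invariant equivalence relations $E$ on $M^k$, with $M\subseteq M^{eq}$ via equality on $M^1$. For finite $A\subseteq M^{eq}$: $\mathrm{acl}^{eq}A=\{e: G_A\cdot e \text{ finite}\}$, $\mathrm{dcl}^{eq}A=\{e: G_A\cdot e=\{e\}\}$; for infinite $A$ take the union over finite subsets. No algebraicity: for every finite $A\subseteq M$, all $G_A$-orbits on $M\setminus A$ are infinite. Weak elimination of imaginaries: for every $e\in M^{eq}$ there is a real tuple $\bar a$ with $e\in\mathrm{dcl}^{eq}\bar a$ and $\bar a\in\mathrm{acl}^{eq}e$. *)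

theory Defs
  imports Main "HOL-Library.Countable"
begin

text \<open>A relational structure with universe UNIV of type 'a, signature 'r,
  arities ar and interpretations R.  Its automorphism group:\<close>

definition Aut :: "('r \<Rightarrow> nat) \<Rightarrow> ('r \<Rightarrow> 'a list set) \<Rightarrow> ('a \<Rightarrow> 'a) set" where
  "Aut ar R = {g. bij g \<and> (\<forall>r xs. length xs = ar r \<longrightarrow> (xs \<in> R r \<longleftrightarrow> map g xs \<in> R r))}"

text \<open>Oligomorphic group: finitely many G-orbits on n-tuples for every n
  (Ryll-Nardzewski characterisation of aleph_0-categoricity of a countable structure).\<close>

definition oligomorphic :: "('a \<Rightarrow> 'a) set \<Rightarrow> bool" where
  "oligomorphic G \<longleftrightarrow>
     (\<forall>n. finite ((\<lambda>xs. (\<lambda>g. map g xs) ` G) ` {xs. length xs = n}))"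

definition inv_eqrel :: "('a \<Rightarrow> 'a) set \<Rightarrow> nat \<Rightarrow> ('a list \<times> 'a list) set \<Rightarrow> bool" where
  "inv_eqrel G k E \<longleftrightarrow> equiv {xs. length xs = k} E \<and>
     (\<forall>g\<in>G. \<forall>xs ys. (xs, ys) \<in> E \<longrightarrow> (map g xs, map g ys) \<in> E)"

text \<open>Elements of M^eq: triples (k, E, C) with C an E-class of M^k.\<close>

type_synonym 'a imag = "nat \<times> ('a list \<times> 'a list) set \<times> 'a list set"

definition Meq :: "('a \<Rightarrow> 'a) set \<Rightarrow> 'a imag set" where
  "Meq G = {(k, E, C). inv_eqrel G k E \<and> C \<in> {xs. length xs = k} // E}"

definition act :: "('a \<Rightarrow> 'a) \<Rightarrow> 'a imag \<Rightarrow> 'a imag" where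
  "act g e = (case e of (k, E, C) \<Rightarrow> (k, E, map g ` C))"

definition real_el :: "'a \<Rightarrow> 'a imag" where
  "real_el a = (1, Id_on {xs. length xs = 1}, {[a]})"

definition stab :: "('a \<Rightarrow> 'a) set \<Rightarrow> 'a imag set \<Rightarrow> ('a \<Rightarrow> 'a) set" where
  "stab G X = {g\<in>G. \<forall>x\<in>X. act g x = x}"

text \<open>acl^eq and dcl^eq; for infinite X this is the union over finite subsets,
  which for finite X agrees with the direct definition.\<close>

definition acl_eq :: "('a \<Rightarrow> 'a) set \<Rightarrow> 'a imag set \<Rightarrow> 'a imag set" where
  "acl_eq G X = {e\<in>Meq G. \<exists>F. F \<subseteq> X \<and> finite F \<and> finite ((\<lambda>g. act g e) ` stab G F)}"

definition dcl_eq :: "('a \<Rightarrow> 'a) set \<Rightarrow> 'a imag set \<Rightarrow> 'a imag set" where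
  "dcl_eq G X = {e\<in>Meq G. \<exists>F. F \<subseteq> X \<and> finite F \<and> (\<lambda>g. act g e) ` stab G F = {e}}"

definition no_algebraicity :: "('a \<Rightarrow> 'a) set \<Rightarrow> bool" where
  "no_algebraicity G \<longleftrightarrow>
     (\<forall>A b. finite A \<and> b \<notin> A \<longrightarrow>
        infinite ((\<lambda>g. g b) ` stab G (real_el ` A)))"

definition weak_EI :: "('a \<Rightarrow> 'a) set \<Rightarrow> bool" where
  "weak_EI G \<longleftrightarrow>
     (\<forall>e\<in>Meq G. \<exists>as. e \<in> dcl_eq G (real_el ` set as) \<and> real_el ` set as \<subseteq> acl_eq G {e})"

end

theory Submission
  imports Defs
begin

lemma act_comp: "act (f \<circ> g) e = act f (act g e)"
  by (cases e) (auto simp: act_def image_image)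

lemma act_id: "act id e = e"
  by (cases e) (auto simp: act_def)

lemma Aut_inv: assumes "g \<in> Aut ar R" shows "inv g \<in> Aut ar R"
proof -
  have b: "bij g" and P: "\<And>r xs. length xs = ar r \<Longrightarrow> (xs \<in> R r \<longleftrightarrow> map g xs \<in> R r)"
    using assms unfolding Aut_def by blast+
  have "bij (inv g)" using b by (simp add: bij_imp_bij_inv)
  moreover have "xs \<in> R r \<longleftrightarrow> map (inv g) xs \<in> R r" if "length xs = ar r" for r xs
  proof -
    have fi: "g \<circ> inv g = id" using b by (meson bij_is_surj surj_iff)
    have m: "map g (map (inv g) xs) = xs" by (simp add: fi)
    have l: "length (map (inv g) xs) = ar r" using that by simp
    have "map (inv g) xs \<in> R r \<longleftrightarrow> map g (map (inv g) xs) \<in> R r" by (rule P[OF l])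
    then show ?thesis unfolding m by (rule sym)
  qed
  ultimately show ?thesis unfolding Aut_def by blast
qed

lemma Aut_comp: assumes "g \<in> Aut ar R" "h \<in> Aut ar R" shows "g \<circ> h \<in> Aut ar R"
proof -
  have bg: "bij g" and Pg: "\<And>r xs. length xs = ar r \<Longrightarrow> (xs \<in> R r \<longleftrightarrow> map g xs \<in> R r)"
    using assms(1) unfolding Aut_def by blast+
  have bh: "bij h" and Ph: "\<And>r xs. length xs = ar r \<Longrightarrow> (xs \<in> R r \<longleftrightarrow> map h xs \<in> R r)"
    using assms(2) unfolding Aut_def by blast+
  have "xs \<in> R r \<longleftrightarrow> map (g \<circ> h) xs \<in> R r" if l: "length xs = ar r" for r xs
  proof -
    have l2: "length (map h xs) = ar r" using l by simp
    have "xs \<in> R r \<longleftrightarrow> map h xs \<in> R r" by (rule Ph[OF l])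
    also have "\<dots> \<longleftrightarrow> map g (map h xs) \<in> R r" by (rule Pg[OF l2])
    finally show ?thesis by simp
  qed
  moreover have "bij (g \<circ> h)" using bg bh by (rule bij_comp[rotated])
  ultimately show ?thesis unfolding Aut_def by blast
qed

lemma orbit_trans:
  assumes GA: "G = Aut ar R"
    and fe: "finite ((\<lambda>g. act g e) ` stab G F)"
    and fx: "finite ((\<lambda>g. act g x) ` stab G {e})"
  shows "finite ((\<lambda>g. act g x) ` stab G F)"
proof -
  define Orb where "Orb = (\<lambda>g. act g e) ` stab G F"
  define c where "c y = (SOME g. g \<in> stab G F \<and> act g e = y)" for y
  have c: "c y \<in> stab G F \<and> act (c y) e = y" if "y \<in> Orb" for y
  proof -
    from that obtain g0 where "g0 \<in> stab G F" "act g0 e = y" unfolding Orb_def by blast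
    then show ?thesis unfolding c_def by (rule someI[where P="\<lambda>g. g \<in> stab G F \<and> act g e = y", OF conjI])
  qed
  have "(\<lambda>g. act g x) ` stab G F \<subseteq> (\<Union>y\<in>Orb. act (c y) ` ((\<lambda>g. act g x) ` stab G {e}))"
  proof
    fix z assume "z \<in> (\<lambda>g. act g x) ` stab G F"
    then obtain g where g: "g \<in> stab G F" and z: "z = act g x" by blast
    define y where "y = act g e"
    have yO: "y \<in> Orb" using g unfolding Orb_def y_def by blast
    note cy = c[OF yO]
    have cyG: "c y \<in> Aut ar R" and cyF: "\<forall>w\<in>F. act (c y) w = w"
      using cy GA by (auto simp: stab_def)
    have bc: "bij (c y)" using cyG unfolding Aut_def by blast
    have gG: "g \<in> Aut ar R" and gF: "\<forall>w\<in>F. act g w = w" using g GA by (auto simp: stab_def)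
    define h where "h = inv (c y) \<circ> g"
    have hG: "h \<in> Aut ar R" unfolding h_def by (rule Aut_comp[OF Aut_inv[OF cyG] gG])
    have invc: "act (inv (c y)) (act (c y) w) = w" for w
      using bc by (simp flip: act_comp add: bij_is_inj act_id)
    have he: "act h e = e"
      unfolding h_def act_comp using cy y_def invc by metis
    have hF: "\<forall>w\<in>F. act h w = w"
      unfolding h_def act_comp using gF cyF invc by metis
    have hs: "h \<in> stab G {e}" using hG he GA by (simp add: stab_def)
    have "c y \<circ> h = g" unfolding h_def using bc
      by (simp add: o_assoc[symmetric] bij_is_surj surj_iff[THEN iffD1] o_assoc)
    then have "z = act (c y) (act h x)" using z by (metis act_comp)
    then show "z \<in> (\<Union>y\<in>Orb. act (c y) ` ((\<lambda>g. act g x) ` stab G {e}))"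
      using yO hs by blast
  qed
  moreover have "finite (\<Union>y\<in>Orb. act (c y) ` ((\<lambda>g. act g x) ` stab G {e}))"
    apply (rule finite_UN_I)
    using fe fx unfolding Orb_def by simp_all
  ultimately show ?thesis by (rule finite_subset)
qed

lemma act_real: "act g (real_el a) = real_el (g a)"
  by (simp add: act_def real_el_def)

lemma inj_real: "inj real_el"
  by (auto simp: inj_def real_el_def)

lemma acl_real_in:
  assumes GA: "G = Aut ar R" and na: "no_algebraicity G"
    and eA: "e \<in> acl_eq G (real_el ` A)"
    and ae: "real_el a \<in> acl_eq G {e}"
  shows "a \<in> A"
proof -
  obtain F where F: "F \<subseteq> real_el ` A" "finite F" "finite ((\<lambda>g. act g e) ` stab G F)"
    using eA by (auto simp: acl_eq_def)
  obtain F' where F': "F' \<subseteq> {e}" "finite ((\<lambda>g. act g (real_el a)) ` stab G F')"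
    using ae by (auto simp: acl_eq_def)
  have "stab G {e} \<subseteq> stab G F'" using F'(1) by (auto simp: stab_def)
  then have fx: "finite ((\<lambda>g. act g (real_el a)) ` stab G {e})"
    using F'(2) by (meson finite_subset image_mono)
  have fo: "finite ((\<lambda>g. act g (real_el a)) ` stab G F)"
    by (rule orbit_trans[OF GA F(3) fx])
  obtain A' where A': "A' \<subseteq> A" "finite A'" "F = real_el ` A'"
    using F(1,2) by (meson finite_subset_image)
  have "(\<lambda>g. act g (real_el a)) ` stab G F = real_el ` ((\<lambda>g. g a) ` stab G F)"
    by (auto simp: act_real)
  with fo have "finite ((\<lambda>g. g a) ` stab G (real_el ` A'))"
    using A'(3) inj_real by (metis finite_imageD inj_on_subset subset_UNIV)
  with na A'(2) have "a \<in> A'" unfolding no_algebraicity_def by blast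
  with A'(1) show ?thesis by blast
qed

theorem mainTheorem3:
  fixes ar :: "'r \<Rightarrow> nat" and R :: "'r \<Rightarrow> ('a::countable) list set"
  assumes "oligomorphic (Aut ar R)"
    and "no_algebraicity (Aut ar R)"
    and "weak_EI (Aut ar R)"
  shows "\<forall>A B :: 'a set. acl_eq (Aut ar R) (real_el ` A) \<inter> acl_eq (Aut ar R) (real_el ` B)
           = dcl_eq (Aut ar R) (real_el ` (A \<inter> B))"
proof (intro allI equalityI subsetI)
  fix A B :: "'a set" and e
  assume "e \<in> dcl_eq (Aut ar R) (real_el ` (A \<inter> B))"
  then obtain F where "e \<in> Meq (Aut ar R)" "F \<subseteq> real_el ` (A \<inter> B)" "finite F"
     "(\<lambda>g. act g e) ` stab (Aut ar R) F = {e}"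
    by (auto simp: dcl_eq_def)
  then show "e \<in> acl_eq (Aut ar R) (real_el ` A) \<inter> acl_eq (Aut ar R) (real_el ` B)"
    unfolding acl_eq_def by (intro IntI CollectI conjI exI[of _ F]; use image_mono[of "A \<inter> B" A real_el] image_mono[of "A \<inter> B" B real_el] in auto)
next
  fix A B :: "'a set" and e
  assume e: "e \<in> acl_eq (Aut ar R) (real_el ` A) \<inter> acl_eq (Aut ar R) (real_el ` B)"
  then have "e \<in> Meq (Aut ar R)" by (auto simp: acl_eq_def)
  with assms(3) obtain as where as: "e \<in> dcl_eq (Aut ar R) (real_el ` set as)"
    "real_el ` set as \<subseteq> acl_eq (Aut ar R) {e}"
    unfolding weak_EI_def by blast
  have "set as \<subseteq> A \<inter> B"
  proof
    fix a assume "a \<in> set as"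
    then have ae: "real_el a \<in> acl_eq (Aut ar R) {e}" using as(2) by blast
    show "a \<in> A \<inter> B"
      using acl_real_in[OF refl assms(2) _ ae] e by blast
  qed
  then have sub: "real_el ` set as \<subseteq> real_el ` (A \<inter> B)" by blast
  obtain F where F: "e \<in> Meq (Aut ar R)" "F \<subseteq> real_el ` set as" "finite F"
     "(\<lambda>g. act g e) ` stab (Aut ar R) F = {e}"
    using as(1) unfolding dcl_eq_def by blast
  have "F \<subseteq> real_el ` (A \<inter> B)" using sub F(2) by (rule subset_trans[rotated])
  then show "e \<in> dcl_eq (Aut ar R) (real_el ` (A \<inter> B))"
    using F(1,3,4) unfolding dcl_eq_def by blast
qed

end
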